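(* Let $n\ge2$ be an integer, $\sigma\ge0$, $R'>0$, and define $a_1=\frac{n}{2R'}$, $a_2=\frac{a_1}{n-1}$, $a_k=\min\big\{(1+\frac1{n-1})a_{k-1},\frac{\sqrt{n(n+\sigma A_{k-1})}}{2R'}\big\}$ for $k\ge3$, where $A_k=\sum_{i=1}^ka_i$. Then for all $k\ge1$, $$A_k\ge\max\Big\{\frac{n-1}{2R'}\Big(1+\frac1{n-1}\Big)^k\mathbb{1}_{k\le k_0},\ \frac{(n-1)^2\sigma}{(4R')^2n}(k-k_0+n-1)^2\mathbb{1}_{k\ge k_0},\ \frac{n(k-K_0+n-1)}{2R'}\mathbb{1}_{k\ge K_0}\Big\},$$ where $\mathbb{1}$ denotes the indicator function, $K_0=\big\lceil\frac{\log n}{\log n-\log(n-1)}\big\rceil$, $k_0=\big\lceil\frac{\log B_{n,\sigma,R'}}{\log n-\log(n-1)}\big\rceil$, and $$B_{n,\sigma,R'}=\frac{\sigma n(n-1)}{4R'}\Big[1+\sqrt{1+\Big(\frac{4R'}{\sigma(n-1)}\Big)^2}\Big]\ge n\max\Big\{1,\frac{\sigma(n-1)}{2R'}\Big\}.$$ *)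

theory Defs
  imports Complex_Main
begin

text \<open>The step sizes a_k (indexed from 1; a 0 = 0 is a dummy value) with parameters
  n, sigma, R' (written R).\<close>

function seq_a :: "nat \<Rightarrow> real \<Rightarrow> real \<Rightarrow> nat \<Rightarrow> real" where
  "seq_a n \<sigma> R 0 = 0"
| "seq_a n \<sigma> R (Suc 0) = real n / (2 * R)"
| "seq_a n \<sigma> R (Suc (Suc 0)) = (real n / (2 * R)) / (real n - 1)"
| "seq_a n \<sigma> R (Suc (Suc (Suc k))) =
     min ((1 + 1 / (real n - 1)) * seq_a n \<sigma> R (Suc (Suc k)))
         (sqrt (real n * (real n + \<sigma> * (\<Sum>i\<in>{1..Suc (Suc k)}. seq_a n \<sigma> R i))) / (2 * R))"
  by pat_completeness auto
termination by (relation "measure (\<lambda>(n, \<sigma>, R, k). k)") auto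

definition seq_A :: "nat \<Rightarrow> real \<Rightarrow> real \<Rightarrow> nat \<Rightarrow> real" where
  "seq_A n \<sigma> R k = (\<Sum>i\<in>{1..k}. seq_a n \<sigma> R i)"

text \<open>B_{n,sigma,R'}; written as (n(n-1)/(4R')) (sigma + sqrt(sigma^2 + (4R'/(n-1))^2)),
  which equals the paper's expression for sigma > 0 and is its continuous extension
  (value n) at sigma = 0.\<close>
definition B_const :: "nat \<Rightarrow> real \<Rightarrow> real \<Rightarrow> real" where
  "B_const n \<sigma> R = real n * (real n - 1) / (4 * R) *
      (\<sigma> + sqrt (\<sigma>\<^sup>2 + (4 * R / (real n - 1))\<^sup>2))"

definition K0_const :: "nat \<Rightarrow> int" where
  "K0_const n = \<lceil>ln (real n) / (ln (real n) - ln (real n - 1))\<rceil>"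

definition k0_const :: "nat \<Rightarrow> real \<Rightarrow> real \<Rightarrow> int" where
  "k0_const n \<sigma> R = \<lceil>ln (B_const n \<sigma> R) / (ln (real n) - ln (real n - 1))\<rceil>"

end

theory Submission
  imports Defs
begin

lemma seq_A_Suc: "seq_A n s R (Suc k) = seq_A n s R k + seq_a n s R (Suc k)"
  by (simp add: seq_A_def)

lemma seq_A_0: "seq_A n s R 0 = 0" by (simp add: seq_A_def)

lemma a_rec: "n \<ge> 2 \<Longrightarrow> seq_a n s R (Suc (Suc (Suc k))) =
  min (real n / (real n - 1) * seq_a n s R (Suc (Suc k)))
      (sqrt (real n * (real n + s * seq_A n s R (Suc (Suc k)))) / (2 * R))"
proof -
  assume "n \<ge> 2"
  then have "1 + 1 / (real n - 1) = real n / (real n - 1)"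
    by (simp add: field_simps)
  then show ?thesis by (simp add: seq_A_def)
qed

context
  fixes n :: nat and \<sigma> R :: real
  assumes n2: "n \<ge> 2" and sg: "\<sigma> \<ge> 0" and Rp: "R > 0"
begin

lemma a_pos_aux: "\<forall>j. 1 \<le> j \<and> j \<le> k \<longrightarrow> seq_a n \<sigma> R j > 0"
proof (induction k)
  case 0 then show ?case by simp
next
  case (Suc k)
  have A: "seq_A n \<sigma> R k \<ge> 0" unfolding seq_A_def
    using Suc.IH by (intro sum_nonneg) (auto simp: less_imp_le)
  have "seq_a n \<sigma> R (Suc k) > 0"
  proof (cases k)
    case 0 then show ?thesis using n2 Rp by simp
  next
    case (Suc k') note k' = this
    show ?thesis
    proof (cases k')
      case 0 then show ?thesis using k' n2 Rp by simp
    next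
      case (Suc j)
      have "seq_a n \<sigma> R k > 0" using Suc.IH k' by auto
      moreover have "real n * (real n + \<sigma> * seq_A n \<sigma> R k) > 0"
        using n2 sg A by (intro mult_pos_pos add_pos_nonneg mult_nonneg_nonneg) auto
      moreover have "seq_a n \<sigma> R (Suc k) = min (real n / (real n - 1) * seq_a n \<sigma> R k)
        (sqrt (real n * (real n + \<sigma> * seq_A n \<sigma> R k)) / (2 * R))"
        using a_rec[of n \<sigma> R j, OF n2] k' Suc by simp
      ultimately show ?thesis using n2 Rp by simp
    qed
  qed
  then show ?case using Suc.IH by (auto simp: le_Suc_eq)
qed

lemma a_pos: "k \<ge> 1 \<Longrightarrow> seq_a n \<sigma> R k > 0"
  using a_pos_aux by blast

lemma A_nonneg: "seq_A n \<sigma> R k \<ge> 0"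
  unfolding seq_A_def using a_pos by (intro sum_nonneg) (auto simp: less_imp_le)

lemma lnq_eq: "ln (real n) - ln (real n - 1) = ln (real n / (real n - 1))"
  using n2 by (simp add: ln_div)

lemma lnq_pos: "ln (real n) - ln (real n - 1) > 0"
  using n2 by simp

lemma q_pow: "(real n / (real n - 1)) ^ k = exp (real k * (ln (real n) - ln (real n - 1)))"
proof -
  have "exp (ln (real n) - ln (real n - 1)) = real n / (real n - 1)"
    using n2 by (simp add: lnq_eq)
  then show ?thesis by (simp add: exp_of_nat_mult)
qed

lemma sq_ge: "sqrt (\<sigma>\<^sup>2 + (4 * R / (real n - 1))\<^sup>2) \<ge> 4 * R / (real n - 1)"
  by (rule real_le_rsqrt) simp

lemma sq_ge2: "sqrt (\<sigma>\<^sup>2 + (4 * R / (real n - 1))\<^sup>2) \<ge> \<sigma>"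
  by (rule real_le_rsqrt) simp

lemma B_ge_n: "B_const n \<sigma> R \<ge> real n"
proof -
  have p: "real n * (real n - 1) / (4 * R) > 0" using n2 Rp by simp
  have "B_const n \<sigma> R \<ge> real n * (real n - 1) / (4 * R) * (4 * R / (real n - 1))"
    unfolding B_const_def using p sq_ge sg by (intro mult_left_mono) (auto intro: add_increasing)
  also have "real n * (real n - 1) / (4 * R) * (4 * R / (real n - 1)) = real n"
    using n2 Rp by (simp add: field_simps)
  finally show ?thesis .
qed

lemma B_gt_n: "\<sigma> > 0 \<Longrightarrow> B_const n \<sigma> R > real n"
proof -
  assume s: "\<sigma> > 0"
  have p: "real n * (real n - 1) / (4 * R) > 0" using n2 Rp by simp
  have l: "4 * R / (real n - 1) < \<sigma> + sqrt (\<sigma>\<^sup>2 + (4 * R / (real n - 1))\<^sup>2)"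
    using sq_ge s by linarith
  have "B_const n \<sigma> R > real n * (real n - 1) / (4 * R) * (4 * R / (real n - 1))"
    unfolding B_const_def using p l by (intro mult_strict_left_mono) auto
  also have "real n * (real n - 1) / (4 * R) * (4 * R / (real n - 1)) = real n"
    using n2 Rp by (simp add: field_simps)
  finally show ?thesis .
qed

lemma B_ge_s: "B_const n \<sigma> R \<ge> \<sigma> * real n * (real n - 1) / (2 * R)"
proof -
  have p: "real n * (real n - 1) / (4 * R) > 0" using n2 Rp by simp
  have "B_const n \<sigma> R \<ge> real n * (real n - 1) / (4 * R) * (2 * \<sigma>)"
    unfolding B_const_def using p sq_ge2 sg by (intro mult_left_mono) auto
  also have "real n * (real n - 1) / (4 * R) * (2 * \<sigma>) = \<sigma> * real n * (real n - 1) / (2 * R)"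
    using n2 Rp by (simp add: field_simps)
  finally show ?thesis .
qed

lemma B_pos: "B_const n \<sigma> R > 0" using B_ge_n n2 by linarith

lemma quad:
  assumes t0: "t \<ge> 0" and tB: "t \<le> B_const n \<sigma> R"
  shows "t\<^sup>2 \<le> real n * real n + real n * (real n - 1) * \<sigma> / (2 * R) * t"
proof -
  define s where "s = sqrt (\<sigma>\<^sup>2 + (4 * R / (real n - 1))\<^sup>2)"
  define \<alpha> where "\<alpha> = real n * (real n - 1) / (4 * R)"
  have ap: "\<alpha> > 0" using n2 Rp by (simp add: \<alpha>_def)
  have s2: "s\<^sup>2 = \<sigma>\<^sup>2 + (4 * R / (real n - 1))\<^sup>2" unfolding s_def
    by (simp add: add_nonneg_nonneg)
  have ss: "s \<ge> \<sigma>" using sq_ge2 s_def by simp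
  have B: "B_const n \<sigma> R = \<alpha> * (\<sigma> + s)" by (simp add: B_const_def \<alpha>_def s_def)
  have "s\<^sup>2 - \<sigma>\<^sup>2 = (4 * R / (real n - 1))\<^sup>2" using s2 by simp
  moreover have "\<alpha> * (4 * R / (real n - 1)) = real n"
    using n2 Rp by (simp add: \<alpha>_def field_simps)
  then have "real n * real n = \<alpha>\<^sup>2 * (4 * R / (real n - 1))\<^sup>2"
    by (metis power2_eq_square power_mult_distrib)
  ultimately have N2: "real n * real n = \<alpha>\<^sup>2 * (s\<^sup>2 - \<sigma>\<^sup>2)" by simp
  have lin: "real n * (real n - 1) * \<sigma> / (2 * R) = 2 * \<alpha> * \<sigma>"
    using Rp by (simp add: \<alpha>_def field_simps)
  have f1: "t - \<alpha> * \<sigma> - \<alpha> * s \<le> 0" using tB B by (simp add: algebra_simps)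
  have f2: "t - \<alpha> * \<sigma> + \<alpha> * s \<ge> 0"
    using t0 ss ap by (smt (verit) mult_left_mono)
  have "(t - \<alpha> * \<sigma> - \<alpha> * s) * (t - \<alpha> * \<sigma> + \<alpha> * s) \<le> 0"
    using f1 f2 by (rule mult_nonpos_nonneg)
  then show ?thesis unfolding N2 lin by (simp add: algebra_simps power2_eq_square)
qed

lemma K0_ge1: "K0_const n \<ge> 1"
proof -
  have "ln (real n) / (ln (real n) - ln (real n - 1)) > 0"
    using lnq_pos n2 by (intro divide_pos_pos) auto
  then show ?thesis unfolding K0_const_def by (simp add: le_ceiling_iff)
qed

lemma K0_le_k0: "K0_const n \<le> k0_const n \<sigma> R"
  unfolding K0_const_def k0_const_def
  using lnq_pos B_ge_n n2 by (intro ceiling_mono divide_right_mono) auto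

lemma k0_ge1: "k0_const n \<sigma> R \<ge> 1" using K0_ge1 K0_le_k0 by linarith

lemma K0_pow: "(real n / (real n - 1)) ^ nat (K0_const n) \<ge> real n"
proof -
  have "real (nat (K0_const n)) = real_of_int (K0_const n)" using K0_ge1 by simp
  also have "\<dots> \<ge> ln (real n) / (ln (real n) - ln (real n - 1))"
    unfolding K0_const_def by (rule le_of_int_ceiling)
  finally have "real (nat (K0_const n)) * (ln (real n) - ln (real n - 1)) \<ge> ln (real n)"
    using lnq_pos by (simp add: pos_divide_le_eq)
  then have "exp (ln (real n)) \<le> exp (real (nat (K0_const n)) * (ln (real n) - ln (real n - 1)))"
    by simp
  then show ?thesis using n2 by (simp add: q_pow)
qed

lemma k0_pow: "(real n / (real n - 1)) ^ nat (k0_const n \<sigma> R) \<ge> B_const n \<sigma> R"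
proof -
  have "real (nat (k0_const n \<sigma> R)) = real_of_int (k0_const n \<sigma> R)" using k0_ge1 by simp
  also have "\<dots> \<ge> ln (B_const n \<sigma> R) / (ln (real n) - ln (real n - 1))"
    unfolding k0_const_def by (rule le_of_int_ceiling)
  finally have "real (nat (k0_const n \<sigma> R)) * (ln (real n) - ln (real n - 1)) \<ge> ln (B_const n \<sigma> R)"
    using lnq_pos by (simp add: pos_divide_le_eq)
  then have "exp (ln (B_const n \<sigma> R)) \<le> exp (real (nat (k0_const n \<sigma> R)) * (ln (real n) - ln (real n - 1)))"
    by simp
  then show ?thesis using B_pos by (simp add: q_pow)
qed

lemma pow_lt_B: "int k + 1 \<le> k0_const n \<sigma> R \<Longrightarrow> (real n / (real n - 1)) ^ k < B_const n \<sigma> R"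
proof -
  assume "int k + 1 \<le> k0_const n \<sigma> R"
  then have "real k < ln (B_const n \<sigma> R) / (ln (real n) - ln (real n - 1))"
    unfolding k0_const_def by (simp add: le_ceiling_iff)
  then have "real k * (ln (real n) - ln (real n - 1)) < ln (B_const n \<sigma> R)"
    using lnq_pos by (simp add: pos_less_divide_eq)
  then have "exp (real k * (ln (real n) - ln (real n - 1))) < exp (ln (B_const n \<sigma> R))"
    by simp
  then show ?thesis using B_pos by (simp add: q_pow)
qed

lemma K0_1: "K0_const n = 1 \<Longrightarrow> n = 2"
proof -
  assume "K0_const n = 1"
  then have "ln (real n) / (ln (real n) - ln (real n - 1)) \<le> 1"
    unfolding K0_const_def by (metis le_of_int_ceiling of_int_1)
  then have "ln (real n) \<le> ln (real n) - ln (real n - 1)"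
    using lnq_pos by (simp add: pos_divide_le_eq)
  then have "ln (real n - 1) \<le> 0" by simp
  then have "real n - 1 \<le> 1" using n2 by (simp add: ln_le_zero_iff)
  then show "n = 2" using n2 by simp
qed

lemma k0_ge2: "\<sigma> > 0 \<Longrightarrow> k0_const n \<sigma> R \<ge> 2"
proof -
  assume s: "\<sigma> > 0"
  have "ln (real n - 1) \<ge> 0" using n2 by simp
  then have "ln (real n) - ln (real n - 1) \<le> ln (real n)" by simp
  also have "ln (real n) < ln (B_const n \<sigma> R)" using B_gt_n[OF s] n2 by simp
  finally have "1 < ln (B_const n \<sigma> R) / (ln (real n) - ln (real n - 1))"
    using lnq_pos by (simp add: pos_less_divide_eq)
  then show ?thesis unfolding k0_const_def by (simp add: le_ceiling_iff)
qed

lemma geo: "1 \<le> k \<Longrightarrow> int k \<le> k0_const n \<sigma> R \<Longrightarrow>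
  seq_A n \<sigma> R k = (real n - 1) / (2 * R) * (real n / (real n - 1)) ^ k \<and>
  (2 \<le> k \<longrightarrow> seq_a n \<sigma> R k = seq_A n \<sigma> R k / real n)"
proof (induction k)
  case 0 then show ?case by simp
next
  case (Suc k)
  have N1: "real n - 1 > 0" using n2 by simp
  show ?case
  proof (cases k)
    case 0
    then show ?thesis using N1 Rp by (simp add: seq_A_def field_simps)
  next
    case (Suc k') note k' = this
    show ?thesis
    proof (cases k')
      case 0
      then have "seq_A n \<sigma> R (Suc k) = real n / (2 * R) + real n / (2 * R) / (real n - 1)"
        using k' by (simp add: seq_A_def)
      moreover have "real n / (2 * R) + real n / (2 * R) / (real n - 1)
          = (real n - 1) / (2 * R) * (real n / (real n - 1)) ^ 2"
        "real n / (2 * R) / (real n - 1) = 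
          (real n - 1) / (2 * R) * (real n / (real n - 1)) ^ 2 / real n"
      proof -
        define m where "m = real n - 1"
        have m0: "m > 0" using N1 m_def by simp
        have nm: "real n = m + 1" using m_def by simp
        show e1: "real n / (2 * R) + real n / (2 * R) / (real n - 1)
          = (real n - 1) / (2 * R) * (real n / (real n - 1)) ^ 2"
          unfolding nm using m0 Rp by (simp add: power_divide field_simps power2_eq_square)
        have "(real n - 1) / (2 * R) * (real n / (real n - 1)) ^ 2 / real n
          = (real n / (2 * R) + real n / (2 * R) / (real n - 1)) / real n" by (simp only: e1)
        also have "\<dots> = real n / (2 * R) / (real n - 1)"
        proof -
          have "(m+1)/(2*R) + (m+1)/(2*R)/m = (m+1) * ((m+1)/(2*R)/m)"
            using m0 Rp by (simp add: field_simps)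
          moreover have "m+1 \<noteq> 0" using m0 by simp
          ultimately show ?thesis unfolding nm by simp
        qed
        finally show "real n / (2 * R) / (real n - 1) = 
          (real n - 1) / (2 * R) * (real n / (real n - 1)) ^ 2 / real n" by simp
      qed
      ultimately show ?thesis using 0 k' by (simp add: numeral_2_eq_2)
    next
      case (Suc j)
      have IH: "seq_A n \<sigma> R k = (real n - 1) / (2 * R) * (real n / (real n - 1)) ^ k"
        "seq_a n \<sigma> R k = seq_A n \<sigma> R k / real n"
        using Suc.IH Suc.prems k' Suc by auto
      define t where "t = (real n / (real n - 1)) ^ k"
      have t0: "t \<ge> 0" using N1 by (simp add: t_def)
      have tB: "t \<le> B_const n \<sigma> R" using pow_lt_B[of k] Suc.prems t_def by simp
      have "real n * (real n + \<sigma> * seq_A n \<sigma> R k) =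
          real n * real n + real n * (real n - 1) * \<sigma> / (2 * R) * t"
        unfolding IH(1) t_def[symmetric] by (simp add: algebra_simps)
      then have "t\<^sup>2 \<le> real n * (real n + \<sigma> * seq_A n \<sigma> R k)"
        using quad[OF t0 tB] by simp
      then have ts: "t \<le> sqrt (real n * (real n + \<sigma> * seq_A n \<sigma> R k))"
        by (rule real_le_rsqrt)
      have qa: "real n / (real n - 1) * seq_a n \<sigma> R k = t / (2 * R)"
        using IH N1 n2 Rp unfolding t_def[symmetric] by (simp add: field_simps)
      have "seq_a n \<sigma> R (Suc k) = min (real n / (real n - 1) * seq_a n \<sigma> R k)
        (sqrt (real n * (real n + \<sigma> * seq_A n \<sigma> R k)) / (2 * R))"
        using a_rec[of n \<sigma> R j, OF n2] k' Suc by simp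
      also have "\<dots> = t / (2 * R)" unfolding qa using ts Rp
        by (simp add: divide_right_mono)
      finally have aS: "seq_a n \<sigma> R (Suc k) = t / (2 * R)" .
      have AS: "seq_A n \<sigma> R (Suc k) = (real n - 1) / (2 * R) * t + t / (2 * R)"
        using seq_A_Suc IH(1) aS t_def by simp
      have AS2: "seq_A n \<sigma> R (Suc k) = real n * t / (2 * R)"
        unfolding AS using Rp by (simp add: field_simps)
      have "(real n - 1) / (2 * R) * (real n / (real n - 1)) ^ Suc k
         = ((real n - 1) * (real n / (real n - 1))) * t / (2 * R)" by (simp add: t_def)
      also have "(real n - 1) * (real n / (real n - 1)) = real n" using N1 by simp
      finally have "seq_A n \<sigma> R (Suc k) = (real n - 1) / (2 * R) * (real n / (real n - 1)) ^ Suc k"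
        using AS2 by simp
      moreover have "seq_a n \<sigma> R (Suc k) = seq_A n \<sigma> R (Suc k) / real n"
        using AS2 aS n2 by simp
      ultimately show ?thesis by simp
    qed
  qed
qed

lemma rec2: "j \<ge> 2 \<Longrightarrow> seq_a n \<sigma> R (Suc j) = min (real n / (real n - 1) * seq_a n \<sigma> R j)
        (sqrt (real n * (real n + \<sigma> * seq_A n \<sigma> R j)) / (2 * R))"
proof -
  assume "j \<ge> 2"
  then obtain j' where "j = Suc (Suc j')" by (metis add_2_eq_Suc le_Suc_ex)
  then show ?thesis using a_rec[of n \<sigma> R j', OF n2] by simp
qed

lemma S_ge: "sqrt (real n * (real n + \<sigma> * seq_A n \<sigma> R j)) / (2 * R) \<ge> real n / (2 * R)"
proof -
  have "\<sigma> * seq_A n \<sigma> R j \<ge> 0" using A_nonneg[of j] sg by simp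
  then have "real n * real n \<le> real n * (real n + \<sigma> * seq_A n \<sigma> R j)"
    by (intro mult_left_mono) auto
  then have "(real n)\<^sup>2 \<le> real n * (real n + \<sigma> * seq_A n \<sigma> R j)"
    by (simp add: power2_eq_square)
  then have "real n \<le> sqrt (real n * (real n + \<sigma> * seq_A n \<sigma> R j))"
    by (rule real_le_rsqrt)
  then show ?thesis using Rp by (simp add: divide_right_mono)
qed

lemma q_ge1: "real n / (real n - 1) \<ge> 1" using n2 by simp

lemma a_ge_half: "nat (K0_const n) + 1 \<le> j \<Longrightarrow> seq_a n \<sigma> R j \<ge> real n / (2 * R)"
proof (induction j rule: dec_induct)
  case base
  show ?case
  proof (cases "K0_const n = 1")
    case True
    then have "n = 2" using K0_1 by simp
    then show ?thesis using True by (simp add: numeral_2_eq_2)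
  next
    case False
    define k where "k = nat (K0_const n)"
    have k2: "k \<ge> 2" using False K0_ge1 k_def by simp
    have kk: "int k \<le> k0_const n \<sigma> R" using K0_le_k0 K0_ge1 k_def by simp
    have g: "seq_A n \<sigma> R k = (real n - 1) / (2 * R) * (real n / (real n - 1)) ^ k"
       "seq_a n \<sigma> R k = seq_A n \<sigma> R k / real n" using geo[OF _ kk] k2 by auto
    have N1: "real n - 1 > 0" using n2 by simp
    have "real n / (real n - 1) * seq_a n \<sigma> R k = (real n / (real n - 1)) ^ k / (2 * R)"
    proof -
      have e: "real n / (real n - 1) * ((real n - 1) / (2*R) * x / real n) = x/(2*R)" for x
        using N1 by auto
      show ?thesis unfolding g using e by simp
    qed
    also have "\<dots> \<ge> real n / (2 * R)" using K0_pow Rp k_def by (simp add: divide_right_mono)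
    finally have "real n / (real n - 1) * seq_a n \<sigma> R k \<ge> real n / (2 * R)" .
    then show ?thesis using rec2[OF k2] S_ge[of k] k_def by simp
  qed
next
  case (step j)
  have j2: "j \<ge> 2" using step K0_ge1 by linarith
  have "1 * seq_a n \<sigma> R j \<le> real n / (real n - 1) * seq_a n \<sigma> R j"
    using a_pos[of j] j2 by (intro mult_right_mono[OF q_ge1]) auto
  then have "real n / (real n - 1) * seq_a n \<sigma> R j \<ge> seq_a n \<sigma> R j" by simp
  then show ?case using rec2[OF j2] S_ge[of j] step.IH by simp
qed

lemma claim3: "int k \<ge> K0_const n \<Longrightarrow>
   seq_A n \<sigma> R k \<ge> real n * (real k - real_of_int (K0_const n) + real n - 1) / (2 * R)"
proof -
  assume "int k \<ge> K0_const n"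
  then have kk: "nat (K0_const n) \<le> k" by simp
  then show ?thesis
  proof (induction k rule: dec_induct)
    case base
    define k where "k = nat (K0_const n)"
    have k1: "k \<ge> 1" using K0_ge1 k_def by simp
    have kk: "int k \<le> k0_const n \<sigma> R" using K0_le_k0 K0_ge1 k_def by simp
    have g: "seq_A n \<sigma> R k = (real n - 1) / (2 * R) * (real n / (real n - 1)) ^ k"
      using geo[OF k1 kk] by auto
    have N1: "real n - 1 > 0" using n2 by simp
    have "(real n - 1) / (2 * R) * real n \<le> (real n - 1) / (2 * R) * (real n / (real n - 1)) ^ k"
      using K0_pow k_def N1 Rp by (intro mult_left_mono) auto
    moreover have "real k = real_of_int (K0_const n)" using K0_ge1 k_def by simp
    ultimately show ?case using g k_def by (simp add: field_simps)
  next
    case (step m)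
    have "seq_a n \<sigma> R (Suc m) \<ge> real n / (2 * R)" using a_ge_half step by simp
    then show ?case using step.IH seq_A_Suc[of n \<sigma> R m] Rp
      by (simp add: field_simps)
  qed
qed

lemma claim2:
  assumes sp: "\<sigma> > 0" and kk: "nat (k0_const n \<sigma> R) \<le> k"
  shows "seq_A n \<sigma> R k \<ge> (real n - 1)^2 * \<sigma> / ((4 * R)^2 * real n)
            * (real k - real_of_int (k0_const n \<sigma> R) + real n - 1)^2
       \<and> seq_a n \<sigma> R k \<ge> 2 * ((real n - 1)^2 * \<sigma> / ((4 * R)^2 * real n))
            * (real k - real_of_int (k0_const n \<sigma> R) + real n - 1)"
  using kk
proof (induction k rule: dec_induct)
  case base
  define c where "c = (real n - 1)^2 * \<sigma> / ((4 * R)^2 * real n)"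
  define P where "P = \<sigma> * (real n - 1)^2 / (4 * R^2)"
  define K where "K = nat (k0_const n \<sigma> R)"
  have N1: "real n - 1 > 0" using n2 by simp
  have cP: "c = P / (4 * real n)" unfolding c_def P_def using Rp n2
    by (simp add: field_simps power2_eq_square)
  have P0: "P \<ge> 0" unfolding P_def using sg by simp
  have K2: "K \<ge> 2" using k0_ge2[OF sp] K_def by simp
  have kk: "int K \<le> k0_const n \<sigma> R" using K2 K_def by simp
  have g: "seq_A n \<sigma> R K = (real n - 1) / (2 * R) * (real n / (real n - 1)) ^ K"
       "seq_a n \<sigma> R K = seq_A n \<sigma> R K / real n" using geo[OF _ kk] K2 by auto
  have "seq_A n \<sigma> R K \<ge> (real n - 1) / (2 * R) * B_const n \<sigma> R"
    unfolding g using k0_pow K_def N1 Rp by (intro mult_left_mono) auto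
  moreover have "(real n - 1) / (2 * R) * B_const n \<sigma> R \<ge>
      (real n - 1) / (2 * R) * (\<sigma> * real n * (real n - 1) / (2 * R))"
    using B_ge_s N1 Rp by (intro mult_left_mono) auto
  moreover have "(real n - 1) / (2 * R) * (\<sigma> * real n * (real n - 1) / (2 * R)) = real n * P"
    unfolding P_def using Rp by (simp add: field_simps power2_eq_square)
  ultimately have AK: "seq_A n \<sigma> R K \<ge> real n * P" by linarith
  have KK: "real K - real_of_int (k0_const n \<sigma> R) = 0" using K2 K_def by simp
  have "c * (real n - 1)^2 = P * ((real n - 1)^2 / (4 * real n))" using cP by simp
  also have "\<dots> \<le> P * real n"
  proof (intro mult_left_mono P0)
    have h: "(real n - 1) * (real n - 1) \<le> real n * real n" using n2 by (intro mult_mono) auto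
    have "real n * real n \<ge> 0" by simp
    moreover have "real n * (4 * real n) = 4 * (real n * real n)" by simp
    ultimately have "(real n - 1)^2 \<le> real n * (4 * real n)" using h
      unfolding power2_eq_square by linarith
    then show "(real n - 1)^2 / (4 * real n) \<le> real n" using n2 by (simp add: divide_le_eq)
  qed
  finally have A1: "c * (real n - 1)^2 \<le> seq_A n \<sigma> R K" using AK by (simp add: mult.commute)
  have "2 * c * (real n - 1) = P * ((real n - 1) / (2 * real n))" using cP n2 by simp
  also have "\<dots> \<le> P * 1"
    using n2 by (intro mult_left_mono P0) (simp add: divide_le_eq)
  also have "\<dots> \<le> seq_a n \<sigma> R K" using AK g(2) n2 by (simp add: le_divide_eq mult.commute)
  finally have A2: "2 * c * (real n - 1) \<le> seq_a n \<sigma> R K" .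
  show ?case using A1 A2 KK unfolding c_def K_def by simp
next
  case (step k)
  define c where "c = (real n - 1)^2 * \<sigma> / ((4 * R)^2 * real n)"
  define m where "m = real k - real_of_int (k0_const n \<sigma> R) + real n - 1"
  have N1: "real n - 1 > 0" using n2 by simp
  have c0: "c \<ge> 0" unfolding c_def using sg by simp
  have m1: "m \<ge> real n - 1" using step(1) k0_ge1 unfolding m_def by linarith
  have k2: "k \<ge> 2" using step(1) k0_ge2[OF sp] by linarith
  have IH: "seq_A n \<sigma> R k \<ge> c * m^2" "seq_a n \<sigma> R k \<ge> 2 * c * m"
    using step.IH unfolding c_def m_def by auto
  define X where "X = 2 * c * m * (real n / (real n - 1))"
  have X1: "X = m * (real n - 1) * \<sigma> / (4 * R) / (2 * R)"
    unfolding X_def c_def using N1 Rp n2 by (simp add: field_simps power2_eq_square)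
  have br1: "real n / (real n - 1) * seq_a n \<sigma> R k \<ge> X"
  proof -
    have "2 * c * m * (real n / (real n - 1)) \<le> seq_a n \<sigma> R k * (real n / (real n - 1))"
      by (rule mult_right_mono[OF IH(2)]) (use N1 in simp)
    then show ?thesis unfolding X_def by (simp only: mult.commute)
  qed
  have "(m * (real n - 1) * \<sigma> / (4 * R))^2 = real n * \<sigma> * (c * m^2)"
    unfolding c_def using Rp n2 by (simp add: field_simps power2_eq_square)
  also have "\<dots> \<le> real n * \<sigma> * seq_A n \<sigma> R k"
    using IH(1) sg by (intro mult_left_mono) auto
  also have "\<dots> \<le> real n * (real n + \<sigma> * seq_A n \<sigma> R k)"
    by (simp add: algebra_simps)
  finally have "m * (real n - 1) * \<sigma> / (4 * R) \<le> sqrt (real n * (real n + \<sigma> * seq_A n \<sigma> R k))"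
    by (rule real_le_rsqrt)
  then have br2: "sqrt (real n * (real n + \<sigma> * seq_A n \<sigma> R k)) / (2 * R) \<ge> X"
    unfolding X1 using Rp by (intro divide_right_mono) auto
  have aS: "seq_a n \<sigma> R (Suc k) \<ge> X" using rec2[OF k2] br1 br2 by simp
  have "2 * c * (m + 1) \<le> X"
  proof -
    have "(m + 1) * (real n - 1) \<le> m * real n" using m1 by (simp add: algebra_simps)
    then have "m + 1 \<le> m * (real n / (real n - 1))" using N1 by (simp add: le_divide_eq)
    then have "(2 * c) * (m + 1) \<le> (2 * c) * (m * (real n / (real n - 1)))"
      using c0 by (intro mult_left_mono) auto
    then show ?thesis unfolding X_def by (simp only: mult.assoc)
  qed
  then have a2: "seq_a n \<sigma> R (Suc k) \<ge> 2 * c * (m + 1)" using aS by linarith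
  have "seq_A n \<sigma> R (Suc k) \<ge> c * m^2 + 2 * c * (m + 1)"
    using seq_A_Suc[of n \<sigma> R k] IH(1) a2 by linarith
  moreover have "c * m^2 + 2 * c * (m + 1) \<ge> c * (m + 1)^2"
    using c0 by (simp add: power2_eq_square algebra_simps)
  ultimately have A2: "seq_A n \<sigma> R (Suc k) \<ge> c * (m + 1)^2" by linarith
  have "real (Suc k) - real_of_int (k0_const n \<sigma> R) + real n - 1 = m + 1"
    unfolding m_def by simp
  then show ?case using A2 a2 unfolding c_def by simp
qed

end
theorem lemma7:
  fixes n :: nat and \<sigma> R :: real
  assumes "n \<ge> 2" and "\<sigma> \<ge> 0" and "R > 0"
  shows "B_const n \<sigma> R \<ge> real n * max 1 (\<sigma> * (real n - 1) / (2 * R))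
       \<and> (\<forall>k::nat. k \<ge> 1 \<longrightarrow>
          seq_A n \<sigma> R k \<ge>
            max (if int k \<le> k0_const n \<sigma> R
                 then (real n - 1) / (2 * R) * (1 + 1 / (real n - 1)) ^ k else 0)
             (max (if int k \<ge> k0_const n \<sigma> R
                   then (real n - 1)^2 * \<sigma> / ((4 * R)^2 * real n)
                        * (real k - real_of_int (k0_const n \<sigma> R) + real n - 1)^2 else 0)
                  (if int k \<ge> K0_const n
                   then real n * (real k - real_of_int (K0_const n) + real n - 1) / (2 * R)
                   else 0)))"
proof -
  note n2 = assms(1) and sg = assms(2) and Rp = assms(3)
  have q: "1 + 1 / (real n - 1) = real n / (real n - 1)" using n2 by (simp add: field_simps)
  have P1: "B_const n \<sigma> R \<ge> real n * max 1 (\<sigma> * (real n - 1) / (2 * R))"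
  proof -
    have "B_const n \<sigma> R \<ge> real n * 1" using B_ge_n[OF n2 sg Rp] by simp
    moreover have "B_const n \<sigma> R \<ge> real n * (\<sigma> * (real n - 1) / (2 * R))"
      using B_ge_s[OF n2 sg Rp] by (simp add: field_simps)
    ultimately show ?thesis by (simp add: max_def)
  qed
  have P2: "seq_A n \<sigma> R k \<ge>
            max (if int k \<le> k0_const n \<sigma> R
                 then (real n - 1) / (2 * R) * (1 + 1 / (real n - 1)) ^ k else 0)
             (max (if int k \<ge> k0_const n \<sigma> R
                   then (real n - 1)^2 * \<sigma> / ((4 * R)^2 * real n)
                        * (real k - real_of_int (k0_const n \<sigma> R) + real n - 1)^2 else 0)
                  (if int k \<ge> K0_const n
                   then real n * (real k - real_of_int (K0_const n) + real n - 1) / (2 * R)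
                   else 0))" if k1: "k \<ge> 1" for k
  proof -
    have A0: "seq_A n \<sigma> R k \<ge> 0" by (rule A_nonneg[OF n2 sg Rp])
    have T1: "seq_A n \<sigma> R k \<ge> (if int k \<le> k0_const n \<sigma> R
                 then (real n - 1) / (2 * R) * (1 + 1 / (real n - 1)) ^ k else 0)"
      using geo[OF n2 sg Rp k1] A0 q by auto
    have T2: "seq_A n \<sigma> R k \<ge> (if int k \<ge> k0_const n \<sigma> R
                   then (real n - 1)^2 * \<sigma> / ((4 * R)^2 * real n)
                        * (real k - real_of_int (k0_const n \<sigma> R) + real n - 1)^2 else 0)"
    proof (cases "\<sigma> = 0")
      case True then show ?thesis using A0 by simp
    next
      case False
      then have sp: "\<sigma> > 0" using sg by simp
      show ?thesis using claim2[OF n2 sg Rp sp, of k] A0 by auto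
    qed
    have T3: "seq_A n \<sigma> R k \<ge> (if int k \<ge> K0_const n
                   then real n * (real k - real_of_int (K0_const n) + real n - 1) / (2 * R)
                   else 0)"
      using claim3[OF n2 sg Rp, of k] A0 by auto
    show ?thesis using T1 T2 T3 by simp
  qed
  show ?thesis using P1 P2 by blast
qed

end
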